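(* Let $X$ be a compact metric space and $F\colon X\to 2^X$ a set-valued mapping. Then $F$ has the specification property if and only if $F^{-1}$ has the specification property.
   Context: $d$ is the metric on $X$; $2^X$ is the space of nonempty closed subsets of $X$; a set-valued mapping is an upper semicontinuous $F\colon X\to 2^X$. $F^{-1}\colon X\to 2^X$ is defined by $F^{-1}(x)=\{y\in X: x\in F(y)\}$ (it is understood that the relevant maps take nonempty values, which holds when $F$ is surjective in the sense that every $y\in X$ lies in some $F(x)$; specification forces this). An orbit of $x$ under $F$ is a sequence $(x_j)_{j=0}^\infty$ with $x_0=x$, $x_{j+1}\in F(x_j)$. $F$ has the specification property if for every $\epsilon>0$ there is $M\in\mathbb{N}$ such that for any $n$, any $x^1,\dots,x^n\in X$, any integers $0\le a_1\le b_1<a_2\le\dots<a_n\le b_n$ with $a_{i+1}-b_i>M$, any orbits $(x^i_j)_{j=0}^\infty$ of the $x^i$, and any $P>M+b_n-a_1$, there is $z\in X$ with an orbit $(z_j)_{j=0}^\infty$ such that $d(z_j,x^i_j)<\epsilon$ for $1\le i\le n$, $a_i\le j\le b_i$, and $z_P=z$. The same definition applies to $F^{-1}$ with orbits taken under $F^{-1}$. *)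

theory Defs
  imports "HOL-Analysis.Analysis"
begin

definition usc_on :: "'a::metric_space set \<Rightarrow> ('a \<Rightarrow> 'a set) \<Rightarrow> bool" where
  "usc_on X F \<longleftrightarrow> (\<forall>x\<in>X. \<forall>U. open U \<and> F x \<subseteq> U \<longrightarrow>
      (\<exists>\<delta>>0. \<forall>y\<in>X. dist y x < \<delta> \<longrightarrow> F y \<subseteq> U))"

definition set_valued_map :: "'a::metric_space set \<Rightarrow> ('a \<Rightarrow> 'a set) \<Rightarrow> bool" where
  "set_valued_map X F \<longleftrightarrow>
     (\<forall>x\<in>X. F x \<noteq> {} \<and> F x \<subseteq> X \<and> closed (F x)) \<and> usc_on X F"

definition inv_map :: "'a set \<Rightarrow> ('a \<Rightarrow> 'a set) \<Rightarrow> 'a \<Rightarrow> 'a set" where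
  "inv_map X F x = {y\<in>X. x \<in> F y}"

definition is_orbit :: "('a \<Rightarrow> 'a set) \<Rightarrow> 'a \<Rightarrow> (nat \<Rightarrow> 'a) \<Rightarrow> bool" where
  "is_orbit F x xs \<longleftrightarrow> xs 0 = x \<and> (\<forall>j. xs (Suc j) \<in> F (xs j))"

text \<open>The specification property. The n points/orbits and intervals [a_i,b_i] are indexed by
  i = 0..n-1 (paper: 1..n).\<close>
definition has_specification :: "'a::metric_space set \<Rightarrow> ('a \<Rightarrow> 'a set) \<Rightarrow> bool" where
  "has_specification X F \<longleftrightarrow>
    (\<forall>\<epsilon>>0. \<exists>M::nat. \<forall>n::nat. \<forall>a b :: nat \<Rightarrow> nat. \<forall>orb :: nat \<Rightarrow> nat \<Rightarrow> 'a. \<forall>P::nat.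
       (n \<ge> 1 \<and>
        (\<forall>i<n. orb i 0 \<in> X \<and> is_orbit F (orb i 0) (orb i)) \<and>
        (\<forall>i<n. a i \<le> b i) \<and>
        (\<forall>i. Suc i < n \<longrightarrow> b i < a (Suc i) \<and> a (Suc i) - b i > M) \<and>
        P > M + b (n - 1) - a 0)
       \<longrightarrow> (\<exists>z\<in>X. \<exists>zs. is_orbit F z zs \<and>
              (\<forall>i<n. \<forall>j. a i \<le> j \<and> j \<le> b i \<longrightarrow> dist (zs j) (orb i j) < \<epsilon>) \<and>
              zs P = z))"

end

theory Submission
  imports Defs
begin

lemma orbit_in:
  assumes "\<forall>x\<in>X. G x \<subseteq> X" "x \<in> X" "is_orbit G x xs"
  shows "xs j \<in> X"
proof (induction j)
  case 0 then show ?case using assms unfolding is_orbit_def by simp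
next
  case (Suc j) then show ?case using assms unfolding is_orbit_def by blast
qed

lemma chain_mono:
  fixes a b :: "nat \<Rightarrow> nat"
  assumes "\<forall>i<n. a i \<le> b i" "\<forall>i. Suc i < n \<longrightarrow> b i < a (Suc i)"
  shows "i \<le> k \<Longrightarrow> k < n \<Longrightarrow> b i \<le> b k \<and> a i \<le> a k"
proof (induction k)
  case 0 then show ?case by simp
next
  case (Suc k)
  show ?case
  proof (cases "i = Suc k")
    case True then show ?thesis by simp
  next
    case False
    then have "i \<le> k" using Suc by simp
    with Suc have ih: "b i \<le> b k \<and> a i \<le> a k" by simp
    have "b k < a (Suc k)" using assms(2) Suc by simp
    moreover have "a (Suc k) \<le> b (Suc k)" using assms(1) Suc by simp
    moreover have "a k \<le> b k" using assms(1) Suc by simp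
    ultimately show ?thesis using ih by linarith
  qed
qed

lemma rev_spec:
  fixes X :: "'a::metric_space set"
  assumes GX: "\<forall>x\<in>X. G x \<subseteq> X" and Gne: "\<forall>x\<in>X. G x \<noteq> {}"
    and HG: "\<forall>x\<in>X. H x = {y\<in>X. x \<in> G y}"
    and spec: "has_specification X G"
  shows "has_specification X H"
  unfolding has_specification_def
proof (intro allI impI)
  fix \<epsilon> :: real assume "\<epsilon> > 0"
  from spec[unfolded has_specification_def, rule_format, OF this]
  obtain M :: nat where M: "\<forall>n a b orb P. (n \<ge> 1 \<and>
        (\<forall>i<n. orb i 0 \<in> X \<and> is_orbit G (orb i 0) (orb i)) \<and>
        (\<forall>i<n. a i \<le> b i) \<and>
        (\<forall>i. Suc i < n \<longrightarrow> b i < a (Suc i) \<and> a (Suc i) - b i > M) \<and>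
        P > M + b (n - 1) - a 0)
       \<longrightarrow> (\<exists>z\<in>X. \<exists>zs. is_orbit G z zs \<and>
              (\<forall>i<n. \<forall>j. a i \<le> j \<and> j \<le> b i \<longrightarrow> dist (zs j) (orb i j) < \<epsilon>) \<and>
              zs P = z)" by blast
  have HX: "\<forall>x\<in>X. H x \<subseteq> X" using HG by auto
  show "\<exists>M::nat. \<forall>n::nat. \<forall>a b :: nat \<Rightarrow> nat. \<forall>orb :: nat \<Rightarrow> nat \<Rightarrow> 'a. \<forall>P::nat.
       (n \<ge> 1 \<and>
        (\<forall>i<n. orb i 0 \<in> X \<and> is_orbit H (orb i 0) (orb i)) \<and>
        (\<forall>i<n. a i \<le> b i) \<and>
        (\<forall>i. Suc i < n \<longrightarrow> b i < a (Suc i) \<and> a (Suc i) - b i > M) \<and>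
        P > M + b (n - 1) - a 0)
       \<longrightarrow> (\<exists>z\<in>X. \<exists>zs. is_orbit H z zs \<and>
              (\<forall>i<n. \<forall>j. a i \<le> j \<and> j \<le> b i \<longrightarrow> dist (zs j) (orb i j) < \<epsilon>) \<and>
              zs P = z)"
  proof (intro exI[of _ M] allI impI)
    fix n :: nat and a b :: "nat \<Rightarrow> nat" and orb :: "nat \<Rightarrow> nat \<Rightarrow> 'a" and P :: nat
    assume A: "n \<ge> 1 \<and>
        (\<forall>i<n. orb i 0 \<in> X \<and> is_orbit H (orb i 0) (orb i)) \<and>
        (\<forall>i<n. a i \<le> b i) \<and>
        (\<forall>i. Suc i < n \<longrightarrow> b i < a (Suc i) \<and> a (Suc i) - b i > M) \<and>
        P > M + b (n - 1) - a 0"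
    have n1: "n \<ge> 1" using A by blast
    have orbX: "\<And>i. i < n \<Longrightarrow> orb i 0 \<in> X" using A by blast
    have orbO: "\<And>i. i < n \<Longrightarrow> is_orbit H (orb i 0) (orb i)" using A by blast
    have ab: "\<forall>i<n. a i \<le> b i" using A by blast
    have sp: "\<forall>i. Suc i < n \<longrightarrow> b i < a (Suc i) \<and> a (Suc i) - b i > M" using A by blast
    have sp1: "\<forall>i. Suc i < n \<longrightarrow> b i < a (Suc i)" using sp by blast
    have PM: "P > M + b (n - 1) - a 0" using A by blast
    define B where "B = b (n - 1)"
    have bB: "\<And>i. i < n \<Longrightarrow> b i \<le> B" and aA: "\<And>i. i < n \<Longrightarrow> a 0 \<le> a i"
      using chain_mono[OF ab sp1] n1 unfolding B_def by auto
    have a0B: "a 0 \<le> B" using ab bB n1 by (meson le_trans less_le_trans zero_less_one)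
    have orbInX: "\<And>i j. i < n \<Longrightarrow> orb i j \<in> X"
      using orbit_in[OF HX] orbX orbO by blast
    have orbstep: "\<And>i k. i < n \<Longrightarrow> orb i k \<in> G (orb i (Suc k))"
    proof -
      fix i k assume "i < n"
      then have "orb i (Suc k) \<in> H (orb i k)" using orbO unfolding is_orbit_def by blast
      then show "orb i k \<in> G (orb i (Suc k))" using HG orbInX[OF \<open>i<n\<close>] by auto
    qed
    define succ where "succ x = (SOME y. y \<in> G x)" for x
    have succG: "\<And>x. x \<in> X \<Longrightarrow> succ x \<in> G x"
      unfolding succ_def using Gne by (meson ex_in_conv someI_ex)
    have succX: "\<And>x. x \<in> X \<Longrightarrow> succ x \<in> X" using succG GX by blast
    have powX: "\<And>x k. x \<in> X \<Longrightarrow> (succ ^^ k) x \<in> X"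
    proof -
      fix x k assume "x \<in> X" then show "(succ ^^ k) x \<in> X"
        by (induction k) (auto intro: succX)
    qed
    define a' where "a' i = B - b (n - 1 - i)" for i
    define b' where "b' i = B - a (n - 1 - i)" for i
    define orb' where "orb' i j = (if j \<le> B then orb (n - 1 - i) (B - j)
          else (succ ^^ (j - B)) (orb (n - 1 - i) 0))" for i j
    have c1: "\<forall>i<n. orb' i 0 \<in> X \<and> is_orbit G (orb' i 0) (orb' i)"
    proof (intro allI impI conjI)
      fix i assume "i < n"
      then have k: "n - 1 - i < n" by simp
      show "orb' i 0 \<in> X" unfolding orb'_def using orbInX[OF k] by simp
      show "is_orbit G (orb' i 0) (orb' i)" unfolding is_orbit_def
      proof (intro conjI allI)
        fix j
        show "orb' i (Suc j) \<in> G (orb' i j)"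
        proof (cases "Suc j \<le> B")
          case True
          then have "B - j = Suc (B - Suc j)" by simp
          then show ?thesis unfolding orb'_def using True orbstep[OF k, of "B - Suc j"] by simp
        next
          case False
          show ?thesis
          proof (cases "j = B")
            case True
            then show ?thesis unfolding orb'_def using succG orbInX[OF k] by simp
          next
            case False2: False
            then have "Suc j - B = Suc (j - B)" "\<not> j \<le> B" using False by auto
            then show ?thesis unfolding orb'_def using False succG powX orbInX[OF k] by simp
          qed
        qed
      qed simp
    qed
    have c2: "\<forall>i<n. a' i \<le> b' i"
      unfolding a'_def b'_def using ab by (simp add: diff_le_mono2)
    have c3: "\<forall>i. Suc i < n \<longrightarrow> b' i < a' (Suc i) \<and> a' (Suc i) - b' i > M"
    proof (intro allI impI)
      fix i assume "Suc i < n"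
      define k where "k = n - 1 - i"
      have k1: "n - 1 - Suc i = k - 1" and kpos: "k \<ge> 1" and kn: "k < n"
        using \<open>Suc i < n\<close> unfolding k_def by auto
      have e: "Suc (k - 1) = k" using kpos by simp
      have s: "b (k - 1) < a k \<and> a k - b (k - 1) > M" using sp[rule_format, of "k-1"] e kn by simp
      have "a k \<le> B" using ab bB kn by (meson le_trans)
      then show "b' i < a' (Suc i) \<and> a' (Suc i) - b' i > M"
        unfolding a'_def b'_def k1 k_def[symmetric] using s by auto
    qed
    have c4: "P > M + b' (n - 1) - a' 0"
      unfolding a'_def b'_def using PM a0B unfolding B_def by simp
    obtain z zs where zX: "z \<in> X" and zO: "is_orbit G z zs"
      and sh: "\<forall>i<n. \<forall>j. a' i \<le> j \<and> j \<le> b' i \<longrightarrow> dist (zs j) (orb' i j) < \<epsilon>"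
      and zP: "zs P = z"
      using M[rule_format, of n orb' a' b' P] n1 c1 c2 c3 c4 by blast
    have P1: "P \<ge> 1" using c4 by simp
    have zsX: "\<And>j. zs j \<in> X" using orbit_in[OF GX zX zO] .
    have zstep: "\<And>m. m < P \<Longrightarrow> zs (Suc m mod P) \<in> G (zs m)"
    proof -
      fix m assume "m < P"
      show "zs (Suc m mod P) \<in> G (zs m)"
      proof (cases "Suc m < P")
        case True then show ?thesis using zO unfolding is_orbit_def by simp
      next
        case False
        then have "Suc m = P" using \<open>m<P\<close> by simp
        then show ?thesis using zO zP unfolding is_orbit_def by (metis mod_self)
      qed
    qed
    define c where "c j = (B + (P - 1) * j) mod P" for j
    define u where "u j = zs (c j)" for j
    have cstep: "Suc (c (Suc j)) mod P = c j" for j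
    proof -
      have "Suc (c (Suc j)) mod P = Suc (B + (P - 1) * Suc j) mod P"
        unfolding c_def by (simp add: mod_Suc_eq)
      also have "Suc (B + (P - 1) * Suc j) = (B + (P - 1) * j) + P * 1"
        using P1 by (cases P) (simp_all add: algebra_simps)
      also have "(B + (P - 1) * j + P * 1) mod P = c j" unfolding c_def by simp
      finally show ?thesis .
    qed
    have cP: "c j < P" for j unfolding c_def using P1 by simp
    have uO: "is_orbit H (u 0) u" unfolding is_orbit_def
    proof (intro conjI allI)
      fix j
      have "u j \<in> G (u (Suc j))" unfolding u_def using zstep[OF cP[of "Suc j"]] cstep by simp
      then show "u (Suc j) \<in> H (u j)" using HG zsX unfolding u_def by auto
    qed simp
    have uP: "u P = u 0"
    proof -
      have "B + (P - 1) * P = B + P * (P - 1)" by simp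
      then show ?thesis unfolding u_def c_def by simp
    qed
    have ush: "\<forall>i<n. \<forall>j. a i \<le> j \<and> j \<le> b i \<longrightarrow> dist (u j) (orb i j) < \<epsilon>"
    proof (intro allI impI)
      fix i j assume i: "i < n" and j: "a i \<le> j \<and> j \<le> b i"
      have jB: "j \<le> B" using bB[OF i] j by simp
      have "B - j \<le> B - a 0" using aA[OF i] j by (simp add: diff_le_mono2)
      also have "B - a 0 < P" using PM a0B unfolding B_def by simp
      finally have lt: "B - j < P" .
      have "B + (P - 1) * j = (B - j) + P * j" using jB P1
        by (simp add: algebra_simps diff_mult_distrib)
      then have cj: "c j = B - j" unfolding c_def using lt by simp
      define i' where "i' = n - 1 - i"
      have i'n: "i' < n" and ii: "n - 1 - i' = i" using i unfolding i'_def by auto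
      have "a' i' \<le> B - j \<and> B - j \<le> b' i'" unfolding a'_def b'_def ii using j jB by auto
      then have "dist (zs (B - j)) (orb' i' (B - j)) < \<epsilon>" using sh i'n by blast
      moreover have "orb' i' (B - j) = orb i j" unfolding orb'_def ii using jB by simp
      ultimately show "dist (u j) (orb i j) < \<epsilon>" unfolding u_def cj by simp
    qed
    show "\<exists>z\<in>X. \<exists>zs. is_orbit H z zs \<and>
              (\<forall>i<n. \<forall>j. a i \<le> j \<and> j \<le> b i \<longrightarrow> dist (zs j) (orb i j) < \<epsilon>) \<and>
              zs P = z"
      using uO uP ush zsX unfolding u_def by blast
  qed
qed

theorem theorem9:
  fixes X :: "'a::metric_space set" and F :: "'a \<Rightarrow> 'a set"
  assumes "compact X"
    and "set_valued_map X F"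
    and "\<forall>y\<in>X. \<exists>x\<in>X. y \<in> F x"
  shows "has_specification X F \<longleftrightarrow> has_specification X (inv_map X F)"
proof
  have FX: "\<forall>x\<in>X. F x \<subseteq> X" and Fne: "\<forall>x\<in>X. F x \<noteq> {}"
    using assms(2) unfolding set_valued_map_def by auto
  {
    assume "has_specification X F"
    then show "has_specification X (inv_map X F)"
      using rev_spec[OF FX Fne, of "inv_map X F"] by (simp add: inv_map_def)
  next
    assume "has_specification X (inv_map X F)"
    moreover
      have "\<forall>x\<in>X. inv_map X F x \<subseteq> X" by (auto simp: inv_map_def)
      moreover have "\<forall>x\<in>X. inv_map X F x \<noteq> {}" using assms(3) by (auto simp: inv_map_def)
      moreover have "\<forall>x\<in>X. F x = {y \<in> X. x \<in> inv_map X F y}" using FX by (auto simp: inv_map_def)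
      ultimately show "has_specification X F" using rev_spec[of X "inv_map X F" F] by blast
  }
qed

end
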